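(* Let $1\le m\le n/2$, $\delta>0$, $s:=m-\delta^2$, and put $$d=\frac{2m(n-m)}{n(n-1)(n+2)},\quad b=\frac{4(n-2m)^2}{n(n-2)(n+4)},\quad c=\frac{2m^2(n-m)^2}{n^2(n-1)(n+2)}.$$ If $s\in\Big]\frac{m^2}{n},\ \frac{m^2}{n}+\frac b2+\sqrt{\frac{b^2}{4}+c}\Big[$, then every $\delta$-code $C\subset\mathcal G_{m,n}$ satisfies $$|C|\le\frac{(m-s)\big(s-\frac{m^2}{n}+d\big)^2(n-1)(n+2)}{2\big(s-\frac{m^2}{n}\big)\Big(-\big(s-\frac{m^2}{n}\big)^2+b\big(s-\frac{m^2}{n}\big)+c\Big)}.$$
   Context: $\mathcal G_{m,n}$ is the set of $m$-dimensional linear subspaces of $\mathbb R^n$. For $p,q\in\mathcal G_{m,n}$ with principal angles $\theta_1,\dots,\theta_m\in[0,\pi/2]$ (defined recursively: $\theta_1$ is the minimal angle between a line of $p$ and a line of $q$, the rest are the principal angles of the orthogonal complements of these lines in $p$ and $q$), the chordal distance is $d_c(p,q)=\sqrt{\sum_i\sin^2\theta_i}$. A $\delta$-code is a finite $C\subset\mathcal G_{m,n}$ with $d_c(p,q)\ge\delta$ for all distinct $p,q\in C$. *)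

theory Defs
  imports "HOL-Analysis.Analysis"
begin

definition grassmannian :: "nat \<Rightarrow> ('a::euclidean_space) set set" where
  "grassmannian m = {p. subspace p \<and> dim p = m}"

inductive principal_angles :: "('a::euclidean_space) set \<Rightarrow> 'a set \<Rightarrow> real list \<Rightarrow> bool" where
  Nil: "p = {0} \<Longrightarrow> q = {0} \<Longrightarrow> principal_angles p q []"
| Cons: "\<lbrakk> u \<in> p; v \<in> q; norm u = 1; norm v = 1;
           \<theta> = arccos \<bar>u \<bullet> v\<bar>;
           \<forall>x\<in>p. \<forall>y\<in>q. norm x = 1 \<longrightarrow> norm y = 1 \<longrightarrow> \<theta> \<le> arccos \<bar>x \<bullet> y\<bar>;
           principal_angles (p \<inter> {x. x \<bullet> u = 0}) (q \<inter> {y. y \<bullet> v = 0}) \<theta>s \<rbrakk>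
         \<Longrightarrow> principal_angles p q (\<theta> # \<theta>s)"

definition chordal_dist :: "('a::euclidean_space) set \<Rightarrow> 'a set \<Rightarrow> real" where
  "chordal_dist p q =
     sqrt (sum_list (map (\<lambda>\<theta>. (sin \<theta>)\<^sup>2) (SOME \<theta>s. principal_angles p q \<theta>s)))"

definition delta_code :: "nat \<Rightarrow> real \<Rightarrow> ('a::euclidean_space) set set \<Rightarrow> bool" where
  "delta_code m \<delta> C \<longleftrightarrow> finite C \<and> C \<subseteq> grassmannian m \<and>
     (\<forall>p\<in>C. \<forall>q\<in>C. p \<noteq> q \<longrightarrow> chordal_dist p q \<ge> \<delta>)"

end

theory Submission
  imports Defs
begin


definition dl :: "'n \<Rightarrow> 'n \<Rightarrow> real" where "dl i j = (if i = j then 1 else 0)"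

lemma dl_mult: "dl i j * x = (if i = j then x else 0)" "x * dl i j = (if i = j then x else 0)"
  by (simp_all add: dl_def)
lemma if0_mult: "(if P then x else 0) * y = (if P then x * y else (0::real))"
  "y * (if P then x else 0) = (if P then y * x else (0::real))"
  "(if P then x else 0) / c = (if P then x / c else (0::real))"
  "- (if P then x else 0) = (if P then - x else (0::real))"
  by auto
lemma if0_sum: "(\<Sum>l\<in>UNIV. if P then f l else (0::real)) = (if P then (\<Sum>l\<in>UNIV. f l) else 0)"
  by auto
lemma if0_add: "(if P then x else 0) + (if P then y else 0) = (if P then x + y else (0::real))" by auto
lemma sum_delta_U: "(\<Sum>l\<in>UNIV. if j = l then f l else (0::real)) = f (j::'n::finite)"
  "(\<Sum>l\<in>UNIV. if l = j then f l else (0::real)) = f (j::'n::finite)"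
  by (simp_all add: sum.delta sum.delta')
lemmas dsimps = dl_mult if0_mult if0_sum sum_delta_U

definition Et :: "'n::finite \<Rightarrow> 'n \<Rightarrow> 'n \<Rightarrow> 'n \<Rightarrow> real" where
 "Et i j k l = (dl i k * dl j l + dl i l * dl j k)/2 - dl i j * dl k l / real CARD('n)"

lemma contrE: fixes T :: "'n::finite \<Rightarrow> 'n \<Rightarrow> 'n \<Rightarrow> 'n \<Rightarrow> real" shows "(\<Sum>i\<in>UNIV. \<Sum>j\<in>UNIV. \<Sum>k\<in>UNIV. \<Sum>l\<in>UNIV. Et i j k l * T i j k l) =
  ((\<Sum>i\<in>UNIV. \<Sum>j\<in>UNIV. T i j i j) + (\<Sum>i\<in>UNIV. \<Sum>j\<in>UNIV. T i j j i))/2 - (\<Sum>i\<in>UNIV. \<Sum>k\<in>UNIV. T i i k k)/real CARD('n::finite)"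
  unfolding Et_def
  by (simp add: algebra_simps sum.distrib sum_subtractf sum_divide_distrib[symmetric] dsimps cong: if_cong)


definition ip4 :: "('n::finite \<Rightarrow> 'n \<Rightarrow> 'n \<Rightarrow> 'n \<Rightarrow> real) \<Rightarrow> ('n \<Rightarrow> 'n \<Rightarrow> 'n \<Rightarrow> 'n \<Rightarrow> real) \<Rightarrow> real" where
  "ip4 T U = (\<Sum>i\<in>UNIV. \<Sum>j\<in>UNIV. \<Sum>k\<in>UNIV. \<Sum>l\<in>UNIV. T i j k l * U i j k l)"

lemma ip4_comm: "ip4 T U = ip4 U T" unfolding ip4_def by (simp add: mult.commute)
lemma ip4_lin: "ip4 (\<lambda>i j k l. T i j k l - a * E i j k l - g * F i j k l) U = ip4 T U - a * ip4 E U - g * ip4 F U"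
  unfolding ip4_def by (simp add: algebra_simps sum.distrib sum_subtractf sum_distrib_left)
lemma ip4_nonneg: "ip4 T T \<ge> 0" unfolding ip4_def by (intro sum_nonneg) auto

lemma swap6: fixes f :: "'n::finite \<Rightarrow> 'n \<Rightarrow> 'n \<Rightarrow> 'n \<Rightarrow> 'a \<Rightarrow> 'a \<Rightarrow> real"
  shows "(\<Sum>i\<in>UNIV. \<Sum>j\<in>UNIV. \<Sum>k\<in>UNIV. \<Sum>l\<in>UNIV. \<Sum>p\<in>C. \<Sum>q\<in>C. f i j k l p q)
   = (\<Sum>p\<in>C. \<Sum>q\<in>C. \<Sum>i\<in>UNIV. \<Sum>j\<in>UNIV. \<Sum>k\<in>UNIV. \<Sum>l\<in>UNIV. f i j k l p q)"
  by (simp only: sum.swap[where A="UNIV::'n set" and B=C])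


definition Ft :: "('n::finite \<Rightarrow> 'n \<Rightarrow> real) \<Rightarrow> 'n \<Rightarrow> 'n \<Rightarrow> 'n \<Rightarrow> 'n \<Rightarrow> real" where
 "Ft A i j k l = (dl j k * A l i + dl i l * A k j + dl i k * A l j + dl j l * A k i)/4 - (dl i j * A k l + A i j * dl k l) / real CARD('n)"

lemma contrF: fixes T :: "'n::finite \<Rightarrow> 'n \<Rightarrow> 'n \<Rightarrow> 'n \<Rightarrow> real" shows "ip4 (Ft A) T =
  ((\<Sum>i\<in>UNIV. \<Sum>j\<in>UNIV. \<Sum>l\<in>UNIV. A l i * T i j j l) + (\<Sum>i\<in>UNIV. \<Sum>j\<in>UNIV. \<Sum>k\<in>UNIV. A k j * T i j k i)
 + (\<Sum>i\<in>UNIV. \<Sum>j\<in>UNIV. \<Sum>l\<in>UNIV. A l j * T i j i l) + (\<Sum>i\<in>UNIV. \<Sum>j\<in>UNIV. \<Sum>k\<in>UNIV. A k i * T i j k j))/4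
 - ((\<Sum>i\<in>UNIV. \<Sum>k\<in>UNIV. \<Sum>l\<in>UNIV. A k l * T i i k l) + (\<Sum>i\<in>UNIV. \<Sum>j\<in>UNIV. \<Sum>k\<in>UNIV. A i j * T i j k k)) / real CARD('n)"
  unfolding Ft_def ip4_def
  by (simp add: algebra_simps sum.distrib sum_subtractf sum_divide_distrib[symmetric] dsimps cong: if_cong)



lemma sum3_swap23: "(\<Sum>i\<in>UNIV. \<Sum>j\<in>UNIV. \<Sum>l\<in>UNIV. f i j l) = (\<Sum>i\<in>UNIV. \<Sum>l\<in>UNIV. \<Sum>j\<in>UNIV. f i j (l::'n::finite))"
  by (rule sum.cong[OF refl], rule sum.swap)

context
  fixes X B :: "'n::finite \<Rightarrow> 'n \<Rightarrow> real" and \<alpha> \<beta> :: real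
  assumes symX: "\<And>i j. X i j = X j i" and trX: "(\<Sum>i\<in>UNIV. X i i) = 0"
    and sqX: "\<And>i l. (\<Sum>j\<in>UNIV. X i j * X j l) = \<alpha> * X i l + \<beta> * dl i l"
    and symB: "\<And>i j. B i j = B j i" and trB: "(\<Sum>i\<in>UNIV. B i i) = 0"
begin

lemma trBX: "(\<Sum>i\<in>UNIV. \<Sum>l\<in>UNIV. B l i * (\<Sum>j\<in>UNIV. X i j * X j l)) = \<alpha> * (\<Sum>i\<in>UNIV. \<Sum>j\<in>UNIV. B i j * X i j)"
proof -
  have "(\<Sum>i\<in>UNIV. \<Sum>l\<in>UNIV. B l i * (\<Sum>j\<in>UNIV. X i j * X j l)) = (\<Sum>i\<in>UNIV. \<Sum>l\<in>UNIV. B l i * (\<alpha> * X i l + \<beta> * dl i l))"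
    by (simp add: sqX)
  also have "\<dots> = \<alpha> * (\<Sum>i\<in>UNIV. \<Sum>l\<in>UNIV. B l i * X i l) + \<beta> * (\<Sum>i\<in>UNIV. B i i)"
    by (simp add: algebra_simps sum.distrib sum_distrib_left dsimps)
  also have "\<dots> = \<alpha> * (\<Sum>i\<in>UNIV. \<Sum>j\<in>UNIV. B i j * X i j)"
    using trB symB by (simp add: mult.commute)
  finally show ?thesis .
qed


lemma rot3: "(\<Sum>i\<in>UNIV. \<Sum>j\<in>UNIV. \<Sum>k\<in>UNIV. f i j k) = (\<Sum>j\<in>UNIV. \<Sum>k\<in>UNIV. \<Sum>i\<in>UNIV. f i j (k::'n))"
  apply (rule trans[OF sum.swap]) apply (rule sum.cong[OF refl]) apply (rule sum.swap) done

lemma FX: "ip4 (Ft B) (\<lambda>i j k l. X i j * X k l) = \<alpha> * (\<Sum>i\<in>UNIV. \<Sum>j\<in>UNIV. B i j * X i j)"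
proof -
  have t1: "(\<Sum>i\<in>UNIV. \<Sum>j\<in>UNIV. \<Sum>l\<in>UNIV. B l i * (X i j * X j l)) = \<alpha> * (\<Sum>i\<in>UNIV. \<Sum>j\<in>UNIV. B i j * X i j)"
    unfolding trBX[symmetric] sum3_swap23[of "\<lambda>i j l. B l i * (X i j * X j l)"] by (simp only: sum_distrib_left)
  have t2: "(\<Sum>i\<in>UNIV. \<Sum>j\<in>UNIV. \<Sum>k\<in>UNIV. B k j * (X i j * X k i)) = \<alpha> * (\<Sum>i\<in>UNIV. \<Sum>j\<in>UNIV. B i j * X i j)"
  proof -
    have "(\<Sum>i\<in>UNIV. \<Sum>j\<in>UNIV. \<Sum>k\<in>UNIV. B k j * (X i j * X k i)) = (\<Sum>j\<in>UNIV. \<Sum>k\<in>UNIV. \<Sum>i\<in>UNIV. B k j * (X j i * X i k))"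
      unfolding rot3[of "\<lambda>i j k. B k j * (X i j * X k i)"] by (intro sum.cong refl) (metis symX)
    also have "\<dots> = (\<Sum>j\<in>UNIV. \<Sum>k\<in>UNIV. B k j * (\<Sum>i\<in>UNIV. X j i * X i k))" by (simp only: sum_distrib_left)
    finally show ?thesis using trBX by simp
  qed
  have t3: "(\<Sum>i\<in>UNIV. \<Sum>j\<in>UNIV. \<Sum>l\<in>UNIV. B l j * (X i j * X i l)) = \<alpha> * (\<Sum>i\<in>UNIV. \<Sum>j\<in>UNIV. B i j * X i j)"
  proof -
    have "(\<Sum>i\<in>UNIV. \<Sum>j\<in>UNIV. \<Sum>k\<in>UNIV. B k j * (X i j * X i k)) = (\<Sum>j\<in>UNIV. \<Sum>k\<in>UNIV. \<Sum>i\<in>UNIV. B k j * (X j i * X i k))"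
      unfolding rot3[of "\<lambda>i j k. B k j * (X i j * X i k)"] by (intro sum.cong refl) (metis symX)
    also have "\<dots> = (\<Sum>j\<in>UNIV. \<Sum>k\<in>UNIV. B k j * (\<Sum>i\<in>UNIV. X j i * X i k))" by (simp only: sum_distrib_left)
    finally show ?thesis using trBX by simp
  qed
  have t4: "(\<Sum>i\<in>UNIV. \<Sum>j\<in>UNIV. \<Sum>k\<in>UNIV. B k i * (X i j * X k j)) = \<alpha> * (\<Sum>i\<in>UNIV. \<Sum>j\<in>UNIV. B i j * X i j)"
  proof -
    have "(\<Sum>i\<in>UNIV. \<Sum>j\<in>UNIV. \<Sum>k\<in>UNIV. B k i * (X i j * X k j)) = (\<Sum>i\<in>UNIV. \<Sum>k\<in>UNIV. \<Sum>j\<in>UNIV. B k i * (X i j * X j k))"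
      unfolding sum3_swap23[of "\<lambda>i j k. B k i * (X i j * X k j)"] by (intro sum.cong refl) (metis symX)
    also have "\<dots> = (\<Sum>i\<in>UNIV. \<Sum>k\<in>UNIV. B k i * (\<Sum>j\<in>UNIV. X i j * X j k))" by (simp only: sum_distrib_left)
    finally show ?thesis using trBX by simp
  qed
  have t5: "(\<Sum>i\<in>UNIV. \<Sum>k\<in>UNIV. \<Sum>l\<in>UNIV. B k l * (X i i * X k l)) = 0"
  proof -
    have "(\<Sum>i\<in>UNIV. \<Sum>k\<in>UNIV. \<Sum>l\<in>UNIV. B k l * (X i i * X k l)) = (\<Sum>i\<in>UNIV. X i i * (\<Sum>k\<in>UNIV. \<Sum>l\<in>UNIV. B k l * X k l))"
      by (simp add: sum_distrib_left algebra_simps)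
    also have "\<dots> = 0" by (simp add: sum_distrib_right[symmetric] trX)
    finally show ?thesis .
  qed
  have t6: "(\<Sum>i\<in>UNIV. \<Sum>j\<in>UNIV. \<Sum>k\<in>UNIV. B i j * (X i j * X k k)) = 0"
  proof -
    have "(\<Sum>i\<in>UNIV. \<Sum>j\<in>UNIV. \<Sum>k\<in>UNIV. B i j * (X i j * X k k)) = (\<Sum>i\<in>UNIV. \<Sum>j\<in>UNIV. B i j * X i j * (\<Sum>k\<in>UNIV. X k k))"
      by (simp add: sum_distrib_left algebra_simps)
    also have "\<dots> = 0" by (simp add: trX)
    finally show ?thesis .
  qed
  show ?thesis unfolding contrF using t1 t2 t3 t4 t5 t6 by simp
qed

end


definition nB :: "('n::finite \<Rightarrow> 'n \<Rightarrow> real) \<Rightarrow> real" where "nB B = (\<Sum>i\<in>UNIV. \<Sum>j\<in>UNIV. B i j * B i j)"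

context
  fixes B :: "'n::finite \<Rightarrow> 'n \<Rightarrow> real"
  assumes symB: "\<And>i j. B i j = B j i" and trB: "(\<Sum>i\<in>UNIV. B i i) = 0"
begin


lemma hB1: "(\<Sum>i\<in>UNIV. \<Sum>l\<in>UNIV. B l i * B l i) = nB B" unfolding nB_def by (rule sum.swap)
lemma hB2: "(\<Sum>i\<in>UNIV. \<Sum>l\<in>UNIV. B i l * B l i) = nB B" unfolding nB_def by (intro sum.cong refl) (metis symB)
lemma hB2': "(\<Sum>i\<in>UNIV. \<Sum>l\<in>UNIV. B l i * B i l) = nB B" unfolding nB_def by (intro sum.cong refl) (metis symB)
lemma hB3: "(\<Sum>i\<in>UNIV. \<Sum>j\<in>UNIV. B i i * B j j) = 0" by (simp add: sum_product[symmetric] trB)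
lemma hB4: "(\<Sum>i\<in>UNIV. B i i * c) = 0" "(\<Sum>i\<in>UNIV. c * B i i) = 0"
  by (simp_all add: sum_distrib_right[symmetric] sum_distrib_left[symmetric] trB)
lemma hB0: "(\<Sum>i\<in>UNIV. \<Sum>l\<in>UNIV. B i l * B i l) = nB B" unfolding nB_def ..
lemmas hB = hB0 hB1 hB2 hB2' hB3 hB4

lemma c1: "(\<Sum>i\<in>UNIV. \<Sum>j\<in>UNIV. \<Sum>l\<in>UNIV. B l i * Ft B i j j l) = ((real CARD('n) + 2)/4 - 2/real CARD('n)) * nB B"
  unfolding Ft_def
  apply (simp add: algebra_simps sum.distrib sum_subtractf sum_divide_distrib[symmetric] dsimps trB cong: if_cong)
  apply (simp add: mult.assoc[symmetric] sum_distrib_right[symmetric] sum_distrib_left[symmetric] hB)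
  apply (simp add: field_simps trB)
  done
lemma c2: "(\<Sum>i\<in>UNIV. \<Sum>j\<in>UNIV. \<Sum>k\<in>UNIV. B k j * Ft B i j k i) = ((real CARD('n) + 2)/4 - 2/real CARD('n)) * nB B"
  unfolding Ft_def
  apply (simp add: algebra_simps sum.distrib sum_subtractf sum_divide_distrib[symmetric] dsimps trB cong: if_cong)
  apply (simp add: mult.assoc[symmetric] sum_distrib_right[symmetric] sum_distrib_left[symmetric] hB)
  apply (simp add: field_simps trB)
  done
lemma c3: "(\<Sum>i\<in>UNIV. \<Sum>j\<in>UNIV. \<Sum>l\<in>UNIV. B l j * Ft B i j i l) = ((real CARD('n) + 2)/4 - 2/real CARD('n)) * nB B"
  unfolding Ft_def
  apply (simp add: algebra_simps sum.distrib sum_subtractf sum_divide_distrib[symmetric] dsimps trB cong: if_cong)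
  apply (simp add: mult.assoc[symmetric] sum_distrib_right[symmetric] sum_distrib_left[symmetric] hB)
  apply (simp add: field_simps trB)
  done
lemma c4: "(\<Sum>i\<in>UNIV. \<Sum>j\<in>UNIV. \<Sum>k\<in>UNIV. B k i * Ft B i j k j) = ((real CARD('n) + 2)/4 - 2/real CARD('n)) * nB B"
  unfolding Ft_def
  apply (simp add: algebra_simps sum.distrib sum_subtractf sum_divide_distrib[symmetric] dsimps trB cong: if_cong)
  apply (simp add: mult.assoc[symmetric] sum_distrib_right[symmetric] sum_distrib_left[symmetric] hB)
  apply (simp add: field_simps trB)
  done
lemma c5: "(\<Sum>i\<in>UNIV. \<Sum>k\<in>UNIV. \<Sum>l\<in>UNIV. B k l * Ft B i i k l) = 0"
  unfolding Ft_def
  apply (simp add: algebra_simps sum.distrib sum_subtractf sum_divide_distrib[symmetric] dsimps trB cong: if_cong)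
  apply (simp add: mult.assoc[symmetric] sum_distrib_right[symmetric] sum_distrib_left[symmetric] hB)
  apply (simp add: field_simps trB)
  done
lemma c6: "(\<Sum>i\<in>UNIV. \<Sum>j\<in>UNIV. \<Sum>k\<in>UNIV. B i j * Ft B i j k k) = 0"
  unfolding Ft_def
  apply (simp add: algebra_simps sum.distrib sum_subtractf sum_divide_distrib[symmetric] dsimps trB cong: if_cong)
  apply (simp add: mult.assoc[symmetric] sum_distrib_right[symmetric] sum_distrib_left[symmetric] hB)
  apply (simp add: field_simps trB)
  done

lemma FF: "ip4 (Ft B) (Ft B) = ((real CARD('n) + 2)/4 - 2/real CARD('n)) * nB B"
  unfolding contrF c1 c2 c3 c4 c5 c6 by simp

lemma EF: "ip4 Et (Ft B) = 0"
  unfolding ip4_def contrE unfolding Ft_def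
  apply (simp add: algebra_simps sum.distrib sum_subtractf sum_divide_distrib[symmetric] dsimps trB cong: if_cong)
  apply (simp add: mult.assoc[symmetric] sum_distrib_right[symmetric] sum_distrib_left[symmetric] hB trB)
  done
end

lemma EE: "ip4 Et (Et::'n::finite \<Rightarrow> _) = real CARD('n) * (real CARD('n) + 1) / 2 - 1"
  unfolding ip4_def contrE unfolding Et_def
  apply (simp add: algebra_simps sum.distrib sum_subtractf sum_divide_distrib[symmetric] dsimps cong: if_cong)
  apply (simp add: field_simps dl_def)
  done



definition ipX :: "('n::finite \<Rightarrow> 'n \<Rightarrow> real) \<Rightarrow> ('n \<Rightarrow> 'n \<Rightarrow> real) \<Rightarrow> real" where
  "ipX X Y = (\<Sum>i\<in>UNIV. \<Sum>j\<in>UNIV. X i j * Y i j)"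

lemma ip4_tens: "ip4 (\<lambda>i j k l. X i j * X k l) (\<lambda>i j k l. Y i j * Y k l) = (ipX X Y)\<^sup>2"
  unfolding ip4_def ipX_def power2_eq_square sum_product
  apply (rule sum.cong[OF refl])
  apply (rule trans[OF sum.swap])
  apply (rule sum.cong[OF refl])+
  apply (simp add: algebra_simps)
  done

lemma EX: assumes symX: "\<And>i j. X i j = X j i" and trX: "(\<Sum>i\<in>UNIV. X i i) = 0"
  shows "ip4 Et (\<lambda>i j k l. X i j * X k l) = ipX X X"
proof -
  have "(\<Sum>i\<in>UNIV. \<Sum>k\<in>UNIV. X i i * X k k) = 0" by (simp add: sum_product[symmetric] trX)
  moreover have "(\<Sum>i\<in>UNIV. \<Sum>j\<in>UNIV. X i j * X j i) = ipX X X" unfolding ipX_def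
    by (intro sum.cong refl) (metis symX)
  ultimately show ?thesis unfolding ip4_def contrE by (simp add: ipX_def)
qed

context
  fixes C :: "'a set" and X :: "'a \<Rightarrow> 'n::finite \<Rightarrow> 'n \<Rightarrow> real" and w :: "'a \<Rightarrow> real" and \<alpha> \<beta> :: real
  assumes fin: "finite C" and symX: "\<And>p i j. p \<in> C \<Longrightarrow> X p i j = X p j i"
    and trX: "\<And>p. p \<in> C \<Longrightarrow> (\<Sum>i\<in>UNIV. X p i i) = 0"
    and sqX: "\<And>p i l. p \<in> C \<Longrightarrow> (\<Sum>j\<in>UNIV. X p i j * X p j l) = \<alpha> * X p i l + \<beta> * dl i l"
begin

definition "Aw i j = (\<Sum>p\<in>C. w p * X p i j)"
definition "Sw i j k l = (\<Sum>p\<in>C. w p * (X p i j * X p k l))"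

lemma Aw_sym: "Aw i j = Aw j i" unfolding Aw_def by (intro sum.cong refl) (simp add: symX)
lemma Aw_tr: "(\<Sum>i\<in>UNIV. Aw i i) = 0" unfolding Aw_def
  by (subst sum.swap) (simp add: sum_distrib_left[symmetric] trX)

lemma ip4_Sw: "ip4 T Sw = (\<Sum>p\<in>C. w p * ip4 T (\<lambda>i j k l. X p i j * X p k l))"
  unfolding ip4_def Sw_def sum_distrib_left
  by (simp only: sum.swap[where A="UNIV::'n set" and B=C]) (simp add: algebra_simps)

lemma nrmX: "p \<in> C \<Longrightarrow> ipX (X p) (X p) = \<beta> * real CARD('n)"
proof -
  assume p: "p \<in> C"
  have "ipX (X p) (X p) = (\<Sum>i\<in>UNIV. \<Sum>j\<in>UNIV. X p i j * X p j i)" unfolding ipX_def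
    by (intro sum.cong refl) (metis symX p)
  also have "\<dots> = (\<Sum>i\<in>UNIV. \<alpha> * X p i i + \<beta>)" using sqX[OF p] by (simp add: dl_def)
  also have "\<dots> = \<beta> * real CARD('n)" using trX[OF p] by (simp add: sum.distrib sum_distrib_left[symmetric])
  finally show ?thesis .
qed

lemma SS: "ip4 Sw Sw = (\<Sum>p\<in>C. \<Sum>q\<in>C. w p * w q * (ipX (X p) (X q))\<^sup>2)"
  unfolding ip4_Sw
  apply (subst ip4_comm) unfolding ip4_Sw ip4_tens sum_distrib_left
  by (intro sum.cong refl) (simp add: algebra_simps ipX_def)

lemma ES: "ip4 Et Sw = (\<Sum>p\<in>C. w p) * (\<beta> * real CARD('n))"
  unfolding ip4_Sw sum_distrib_right
  by (intro sum.cong refl) (simp add: EX symX trX nrmX)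

lemma FXp: "p \<in> C \<Longrightarrow> ip4 (Ft Aw) (\<lambda>i j k l. X p i j * X p k l) = \<alpha> * ipX Aw (X p)"
  unfolding ipX_def
  by (rule FX[where \<beta>=\<beta>]) (auto intro: symX trX sqX Aw_sym Aw_tr)

lemma FS: "ip4 (Ft Aw) Sw = \<alpha> * ipX Aw Aw"
proof -
  have "ip4 (Ft Aw) Sw = (\<Sum>p\<in>C. w p * (\<alpha> * ipX Aw (X p)))"
    unfolding ip4_Sw
    by (intro sum.cong refl) (simp add: FXp)
  also have "\<dots> = \<alpha> * ipX Aw Aw"
  proof -
    have e: "ipX Aw Aw = (\<Sum>i\<in>UNIV. \<Sum>j\<in>UNIV. Aw i j * (\<Sum>p\<in>C. w p * X p i j))"
      unfolding ipX_def Aw_def[symmetric] ..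
    show ?thesis unfolding e unfolding ipX_def sum_distrib_left
      by (simp only: sum.swap[where A=C and B="UNIV::'n set"]) (simp add: algebra_simps)
  qed
  finally show ?thesis .
qed


lemma nA: "ipX Aw Aw = (\<Sum>p\<in>C. \<Sum>q\<in>C. w p * w q * ipX (X p) (X q))"
proof -
  have "ipX Aw Aw = (\<Sum>i\<in>UNIV. \<Sum>j\<in>UNIV. \<Sum>p\<in>C. \<Sum>q\<in>C. w p * w q * (X p i j * X q i j))"
    unfolding ipX_def Aw_def sum_product by (simp add: algebra_simps)
  also have "\<dots> = (\<Sum>p\<in>C. \<Sum>q\<in>C. \<Sum>i\<in>UNIV. \<Sum>j\<in>UNIV. w p * w q * (X p i j * X q i j))"
    by (simp only: sum.swap[where A="UNIV::'n set" and B=C])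
  also have "\<dots> = (\<Sum>p\<in>C. \<Sum>q\<in>C. w p * w q * ipX (X p) (X q))"
    unfolding ipX_def sum_distrib_left ..
  finally show ?thesis .
qed

lemma gram:
  assumes n2: "CARD('n) \<ge> 2"
  shows "(\<Sum>p\<in>C. \<Sum>q\<in>C. w p * w q * ((ipX (X p) (X q))\<^sup>2
     - \<alpha>\<^sup>2 / ((real CARD('n) + 2)/4 - 2/real CARD('n)) * ipX (X p) (X q)
     - (\<beta> * real CARD('n))\<^sup>2 / (real CARD('n) * (real CARD('n) + 1) / 2 - 1))) \<ge> 0"
proof -
  define n where "n = real CARD('n)"
  define W where "W = (\<Sum>p\<in>C. w p)"
  define D where "D = n * (n + 1) / 2 - 1"
  define lam where "lam = (n + 2)/4 - 2/n"
  define M where "M = \<beta> * n"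
  define a where "a = W * M / D"
  define g where "g = \<alpha> / lam"
  define nA where "nA = ipX Aw Aw"
  define SS where "SS = (\<Sum>p\<in>C. \<Sum>q\<in>C. w p * w q * (ipX (X p) (X q))\<^sup>2)"
  have n2': "n \<ge> 2" using n2 unfolding n_def by simp
  have Dpos: "D > 0" unfolding D_def using n2' using mult_mono[OF n2' n2'] by (simp add: field_simps)
  define V where "V = (\<lambda>i j k l. Sw i j k l - a * Et i j k l - g * Ft Aw i j k l)"
  have lin2: "\<And>U. ip4 U V = ip4 U Sw - a * ip4 U Et - g * ip4 U (Ft Aw)"
    unfolding V_def by (subst ip4_comm, subst ip4_lin, simp add: ip4_comm)
  have EF0: "ip4 Et (Ft Aw) = 0" by (rule EF[where B=Aw, OF Aw_sym Aw_tr])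
  have FF0: "ip4 (Ft Aw) (Ft Aw) = lam * nA"
    unfolding lam_def nA_def n_def by (simp add: FF[where B=Aw, OF Aw_sym Aw_tr] nB_def ipX_def)
  have ESv: "ip4 Et Sw = W * M" unfolding ES W_def M_def n_def ..
  have FSv: "ip4 (Ft Aw) Sw = \<alpha> * nA" unfolding FS nA_def ..
  have EEv: "ip4 Et (Et::'n \<Rightarrow> _) = D" unfolding EE D_def n_def ..
  have "0 \<le> ip4 V V" by (rule ip4_nonneg)
  also have "ip4 V V = SS - 2 * a * (W * M) + a\<^sup>2 * D - 2 * g * (\<alpha> * nA) + g\<^sup>2 * (lam * nA)"
  proof -
    have x1: "ip4 Sw Et = W * M" using ESv ip4_comm by metis
    have x2: "ip4 Sw (Ft Aw) = \<alpha> * nA" using FSv ip4_comm by metis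
    have x3: "ip4 (Ft Aw) Et = 0" using EF0 ip4_comm by metis
    have x4: "ip4 Sw Sw = SS" using SS unfolding SS_def .
    show ?thesis unfolding lin2 unfolding V_def ip4_lin x1 x2 x3 x4 EF0 FF0 ESv FSv EEv
      by (simp add: power2_eq_square algebra_simps)
  qed
  finally have main: "0 \<le> SS - 2 * a * (W * M) + a\<^sup>2 * D - 2 * g * (\<alpha> * nA) + g\<^sup>2 * (lam * nA)" .
  have k1: "- 2 * a * (W * M) + a\<^sup>2 * D = - ((M\<^sup>2 / D) * (W * W))"
    unfolding a_def using Dpos by (simp add: field_simps power2_eq_square)
  have k2: "- 2 * g * (\<alpha> * nA) + g\<^sup>2 * (lam * nA) = - ((\<alpha>\<^sup>2 / lam) * nA)"
    unfolding g_def by (cases "lam = 0") (simp_all add: field_simps power2_eq_square)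
  have main2: "0 \<le> SS - (\<alpha>\<^sup>2 / lam) * nA - (M\<^sup>2 / D) * (W * W)"
    using main k1 k2 by linarith
  have "(\<Sum>p\<in>C. \<Sum>q\<in>C. w p * w q * ((ipX (X p) (X q))\<^sup>2 - \<alpha>\<^sup>2 / lam * ipX (X p) (X q) - M\<^sup>2 / D))
      = SS - (\<alpha>\<^sup>2 / lam) * nA - (M\<^sup>2 / D) * (W * W)"
  proof -
    have pw: "\<And>p q. w p * w q * ((ipX (X p) (X q))\<^sup>2 - \<alpha>\<^sup>2 / lam * ipX (X p) (X q) - M\<^sup>2 / D)
       = w p * w q * (ipX (X p) (X q))\<^sup>2 - \<alpha>\<^sup>2 / lam * (w p * w q * ipX (X p) (X q)) - M\<^sup>2 / D * (w p * w q)"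
      by (simp add: algebra_simps)
    show ?thesis unfolding pw sum_subtractf sum_distrib_left[symmetric] SS_def nA_def nA W_def sum_product ..
  qed
  then show ?thesis using main2 unfolding lam_def D_def M_def n_def by simp
qed
end


definition orthn :: "('a::euclidean_space) set \<Rightarrow> bool" where
  "orthn B \<longleftrightarrow> finite B \<and> pairwise orthogonal B \<and> (\<forall>x\<in>B. norm x = 1)"

lemma orthn_ip: "orthn B \<Longrightarrow> b \<in> B \<Longrightarrow> c \<in> B \<Longrightarrow> b \<bullet> c = (if b = c then 1 else 0)"
  unfolding orthn_def pairwise_def orthogonal_def
  by (auto simp: norm_eq_1)

lemma proj_perp: assumes "orthn B" "c \<in> B"
  shows "c \<bullet> (x - (\<Sum>b\<in>B. (b \<bullet> x) *\<^sub>R b)) = 0"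
proof -
  have fin: "finite B" using assms(1) orthn_def by blast
  have "c \<bullet> (\<Sum>b\<in>B. (b \<bullet> x) *\<^sub>R b) = (\<Sum>b\<in>B. (b \<bullet> x) * (c \<bullet> b))"
    by (simp add: inner_sum_right)
  also have "\<dots> = (\<Sum>b\<in>B. if c = b then (b \<bullet> x) else 0)"
    by (intro sum.cong refl) (simp add: orthn_ip[OF assms(1) assms(2)])
  also have "\<dots> = c \<bullet> x" using fin assms(2) by (simp add: sum.delta)
  finally show ?thesis by (simp add: inner_diff_right)
qed

lemma proj_in_span: "(\<Sum>b\<in>B. (b \<bullet> x) *\<^sub>R b) \<in> span B"
  by (intro span_sum span_scale span_base)

lemma proj_unique: assumes "orthn B" "orthn B'" "span B = span B'"
  shows "(\<Sum>b\<in>B. (b \<bullet> x) *\<^sub>R b) = (\<Sum>b\<in>B'. (b \<bullet> x) *\<^sub>R b)"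
proof -
  define y where "y = (\<Sum>b\<in>B. (b \<bullet> x) *\<^sub>R b)"
  define y' where "y' = (\<Sum>b\<in>B'. (b \<bullet> x) *\<^sub>R b)"
  have z: "y - y' \<in> span B" using proj_in_span[where B=B and x=x] proj_in_span[where B=B' and x=x] assms(3)
    unfolding y_def y'_def by (simp add: span_diff)
  have o1: "orthogonal (x - y) (y - y')"
    by (rule orthogonal_to_span[OF z]) (metis assms(1) proj_perp y_def orthogonal_def inner_commute)
  have z': "y - y' \<in> span B'" using z assms(3) by simp
  have o2: "orthogonal (x - y') (y - y')"
    by (rule orthogonal_to_span[OF z']) (metis assms(2) proj_perp y'_def orthogonal_def inner_commute)
  have "(y - y') \<bullet> (y - y') = (y - y') \<bullet> ((x - y') - (x - y))" by (simp add: algebra_simps)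
  also have "\<dots> = 0" using o1 o2 unfolding orthogonal_def by (simp add: inner_diff_right inner_commute)
  finally have "y - y' = 0" by simp
  then show ?thesis unfolding y_def y'_def by simp
qed

definition onb :: "(real^'n) set \<Rightarrow> (real^'n) set" where
  "onb p = (SOME B. B \<subseteq> p \<and> pairwise orthogonal B \<and> (\<forall>x\<in>B. norm x = 1) \<and> independent B \<and> card B = dim p \<and> span B = p)"

lemma onb_props: assumes "subspace p"
  shows "onb p \<subseteq> p" "orthn (onb p)" "card (onb p) = dim p" "span (onb p) = p"
proof -
  have ex: "\<exists>B. B \<subseteq> p \<and> pairwise orthogonal B \<and> (\<forall>x\<in>B. norm x = 1) \<and> independent B \<and> card B = dim p \<and> span B = p"
    using orthonormal_basis_subspace[OF assms] by metis
  note h = someI_ex[OF ex, folded onb_def]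
  then show "onb p \<subseteq> p" "card (onb p) = dim p" "span (onb p) = p" by auto
  show "orthn (onb p)" using h unfolding orthn_def by (auto intro: independent_imp_finite)
qed

definition Pm :: "(real^'n) set \<Rightarrow> 'n \<Rightarrow> 'n \<Rightarrow> real" where
  "Pm p i j = (\<Sum>b\<in>onb p. b$i * b$j)"

lemma Pm_basis: assumes "subspace p" "orthn B" "span B = p"
  shows "Pm p i j = (\<Sum>b\<in>B. b$i * b$j)"
proof -
  have "(\<Sum>b\<in>onb p. (b \<bullet> axis j 1) *\<^sub>R b) = (\<Sum>b\<in>B. (b \<bullet> axis j 1) *\<^sub>R b)"
    by (rule proj_unique) (use onb_props[OF assms(1)] assms in auto)
  then have "(\<Sum>b\<in>onb p. (b \<bullet> axis j 1) *\<^sub>R b) $ i = (\<Sum>b\<in>B. (b \<bullet> axis j 1) *\<^sub>R b) $ i" by simp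
  then show ?thesis unfolding Pm_def by (simp add: inner_axis mult.commute)
qed

definition Kpq :: "(real^'n) set \<Rightarrow> (real^'n) set \<Rightarrow> real" where
  "Kpq p q = (\<Sum>i\<in>UNIV. \<Sum>j\<in>UNIV. Pm p i j * Pm q i j)"

lemma Kpq_basis: assumes "subspace p" "orthn B" "span B = p" "subspace q" "orthn C" "span C = q"
  shows "Kpq p q = (\<Sum>b\<in>B. \<Sum>c\<in>C. (b \<bullet> c)\<^sup>2)"
proof -
  have "Kpq p q = (\<Sum>i\<in>UNIV. \<Sum>j\<in>UNIV. (\<Sum>b\<in>B. b$i * b$j) * (\<Sum>c\<in>C. c$i * c$j))"
    unfolding Kpq_def using Pm_basis[OF assms(1-3)] Pm_basis[OF assms(4-6)] by simp
  also have "\<dots> = (\<Sum>b\<in>B. \<Sum>c\<in>C. \<Sum>i\<in>UNIV. \<Sum>j\<in>UNIV. (b$i * c$i) * (b$j * c$j))"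
    unfolding sum_product
    by (simp only: sum.swap[where A="UNIV::'n set" and B=B] sum.swap[where A="UNIV::'n set" and B=C]) (simp add: algebra_simps)
  also have "\<dots> = (\<Sum>b\<in>B. \<Sum>c\<in>C. (b \<bullet> c)\<^sup>2)"
    unfolding inner_vec_def power2_eq_square sum_product by simp
  finally show ?thesis .
qed



lemma opt_zero:
  fixes a c :: real
  assumes H: "\<And>e. (a + e * c)\<^sup>2 \<le> a\<^sup>2 * (1 + e\<^sup>2)"
  shows "c = 0"
proof (rule ccontr)
  assume c: "c \<noteq> 0"
  show False
  proof (cases "a = 0")
    case True
    then show False using H[of 1] c by simp
  next
    case False
    define e where "e = a * c / (a\<^sup>2 + 1)"
    have pos: "a\<^sup>2 + 1 > 0" by (simp add: add_nonneg_pos)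
    have "(a + e * c)\<^sup>2 \<le> a\<^sup>2 * (1 + e\<^sup>2)" by (rule H)
    then have "2 * e * a * c + e\<^sup>2 * c\<^sup>2 \<le> e\<^sup>2 * a\<^sup>2" by (simp add: power2_eq_square algebra_simps)
    then have "2 * (a * c)\<^sup>2 / (a\<^sup>2 + 1) + e\<^sup>2 * c\<^sup>2 \<le> (a * c)\<^sup>2 / (a\<^sup>2 + 1) * (a\<^sup>2 / (a\<^sup>2 + 1))"
      unfolding e_def by (simp add: power2_eq_square field_simps)
    moreover have "(a * c)\<^sup>2 / (a\<^sup>2 + 1) * (a\<^sup>2 / (a\<^sup>2 + 1)) < (a * c)\<^sup>2 / (a\<^sup>2 + 1)"
    proof -
      have h1: "(a * c)\<^sup>2 / (a\<^sup>2 + 1) > 0" using c False pos by simp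
      have h2: "a\<^sup>2 / (a\<^sup>2 + 1) < 1" using pos by simp
      show ?thesis using mult_strict_left_mono[OF h2 h1] by simp
    qed
    moreover have "(a * c)\<^sup>2 / (a\<^sup>2 + 1) > 0" using c False pos by simp
    moreover have "e\<^sup>2 * c\<^sup>2 \<ge> 0" by simp
    ultimately show False by linarith
  qed
qed

lemma opt_homog:
  fixes u v :: "real^'n"
  assumes H: "\<forall>x\<in>p. \<forall>y\<in>q. norm x = 1 \<longrightarrow> norm y = 1 \<longrightarrow> arccos \<bar>u \<bullet> v\<bar> \<le> arccos \<bar>x \<bullet> y\<bar>"
    and uv: "norm u = 1" "norm v = 1"
    and x: "x \<in> p" "norm x = 1" and y: "y \<in> q" "norm y = 1"
  shows "\<bar>x \<bullet> y\<bar> \<le> \<bar>u \<bullet> v\<bar>"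
proof (rule ccontr)
  assume "\<not> ?thesis"
  then have lt: "\<bar>u \<bullet> v\<bar> < \<bar>x \<bullet> y\<bar>" by simp
  have "\<bar>x \<bullet> y\<bar> \<le> 1" using Cauchy_Schwarz_ineq2[of x y] x y by simp
  then have "arccos \<bar>x \<bullet> y\<bar> < arccos \<bar>u \<bullet> v\<bar>"
    using lt by (intro arccos_less_arccos) auto
  then show False using H x y by force
qed

lemma cross_zero:
  fixes u v b :: "real^'n"
  assumes sp: "subspace p"
    and H: "\<forall>x\<in>p. \<forall>y\<in>q. norm x = 1 \<longrightarrow> norm y = 1 \<longrightarrow> arccos \<bar>u \<bullet> v\<bar> \<le> arccos \<bar>x \<bullet> y\<bar>"
    and u: "u \<in> p" "norm u = 1" and v: "v \<in> q" "norm v = 1"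
    and b: "b \<in> p" "norm b = 1" "b \<bullet> u = 0"
  shows "b \<bullet> v = 0"
proof -
  have "\<And>e. ((u \<bullet> v) + e * (b \<bullet> v))\<^sup>2 \<le> (u \<bullet> v)\<^sup>2 * (1 + e\<^sup>2)"
  proof -
    fix e :: real
    define w where "w = u + e *\<^sub>R b"
    have wp: "w \<in> p" unfolding w_def using sp u b by (simp add: subspace_add subspace_scale)
    have nw2: "(norm w)\<^sup>2 = 1 + e\<^sup>2" unfolding w_def power2_norm_eq_inner
      using u b norm_eq_1[of u] norm_eq_1[of b] by (simp add: inner_add_left inner_add_right inner_commute power2_eq_square)
    have nwpos: "norm w > 0" using nw2 by (metis add_pos_nonneg zero_less_one zero_less_power2 zero_le_power2 norm_ge_zero order_less_le power2_eq_square mult_zero_left)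
    have "\<bar>(inverse (norm w) *\<^sub>R w) \<bullet> v\<bar> \<le> \<bar>u \<bullet> v\<bar>"
      by (rule opt_homog[OF H u(2) v(2)]) (use wp sp nwpos v in \<open>auto simp: subspace_scale\<close>)
    then have "\<bar>w \<bullet> v\<bar> \<le> \<bar>u \<bullet> v\<bar> * norm w" using nwpos by (simp add: field_simps abs_mult)
    then have "(w \<bullet> v)\<^sup>2 \<le> (\<bar>u \<bullet> v\<bar> * norm w)\<^sup>2"
      by (metis abs_ge_zero power2_abs power_mono)
    also have "\<dots> = (u \<bullet> v)\<^sup>2 * (1 + e\<^sup>2)" by (simp add: power_mult_distrib nw2)
    finally show "((u \<bullet> v) + e * (b \<bullet> v))\<^sup>2 \<le> (u \<bullet> v)\<^sup>2 * (1 + e\<^sup>2)"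
      unfolding w_def by (simp add: inner_add_left)
  qed
  then show ?thesis by (rule opt_zero)
qed


lemma perp_span:
  fixes u :: "real^'n"
  assumes sp: "subspace p" and u: "u \<in> p" "norm u = 1"
  shows "span (insert u (p \<inter> {x. x \<bullet> u = 0})) = p"
proof
  show "span (insert u (p \<inter> {x. x \<bullet> u = 0})) \<subseteq> p"
    using sp u by (intro span_minimal) auto
  show "p \<subseteq> span (insert u (p \<inter> {x. x \<bullet> u = 0}))"
  proof
    fix x assume x: "x \<in> p"
    have uu: "u \<bullet> u = 1" using u norm_eq_1 by blast
    have "x - (x \<bullet> u) *\<^sub>R u \<in> p \<inter> {x. x \<bullet> u = 0}"
      using x u sp uu by (simp add: subspace_diff subspace_scale inner_diff_left)
    then have a: "x - (x \<bullet> u) *\<^sub>R u \<in> span (insert u (p \<inter> {x. x \<bullet> u = 0}))"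
      by (intro span_base) auto
    have b: "(x \<bullet> u) *\<^sub>R u \<in> span (insert u (p \<inter> {x. x \<bullet> u = 0}))"
      by (intro span_scale span_base) auto
    have "x = (x - (x \<bullet> u) *\<^sub>R u) + (x \<bullet> u) *\<^sub>R u" by simp
    then show "x \<in> span (insert u (p \<inter> {x. x \<bullet> u = 0}))"
      using span_add[OF a b] by metis
  qed
qed

lemma perp_dim:
  fixes u :: "real^'n"
  assumes sp: "subspace p" and u: "u \<in> p" "norm u = 1"
  shows "dim p = dim (p \<inter> {x. x \<bullet> u = 0}) + 1"
proof -
  have sp': "subspace (p \<inter> {x. x \<bullet> u = 0})" using sp by (simp add: subspace_inter subspace_hyperplane2)
  have uu: "u \<bullet> u = 1" using u norm_eq_1 by blast
  have nu: "u \<notin> span (p \<inter> {x. x \<bullet> u = 0})" using sp' uu by (simp add: span_eq_iff[THEN iffD2])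
  have "dim p = dim (span (insert u (p \<inter> {x. x \<bullet> u = 0})))" using perp_span[OF sp u] by simp
  also have "\<dots> = dim (p \<inter> {x. x \<bullet> u = 0}) + 1" unfolding dim_span dim_insert using nu by simp
  finally show ?thesis .
qed

lemma orthn_insert:
  fixes u :: "real^'n"
  assumes B: "orthn B" "\<forall>b\<in>B. b \<bullet> u = 0" and u: "norm u = 1"
  shows "orthn (insert u B)" "u \<notin> B"
proof -
  have uu: "u \<bullet> u = 1" using u norm_eq_1 by blast
  show "u \<notin> B" using B(2) uu by force
  show "orthn (insert u B)" using B u unfolding orthn_def pairwise_def orthogonal_def
    by (auto simp: inner_commute)
qed

lemma span_insert_basis:
  fixes u :: "real^'n"
  assumes sp: "subspace p" and u: "u \<in> p" "norm u = 1"
    and B: "B \<subseteq> p \<inter> {x. x \<bullet> u = 0}" "span B = p \<inter> {x. x \<bullet> u = 0}"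
  shows "span (insert u B) = p"
proof
  show "span (insert u B) \<subseteq> p" using sp u B by (intro span_minimal) auto
  have "insert u (p \<inter> {x. x \<bullet> u = 0}) \<subseteq> span (insert u B)"
    using B(2) span_mono[of B "insert u B"] by (auto intro: span_base)
  then have "span (insert u (p \<inter> {x. x \<bullet> u = 0})) \<subseteq> span (insert u B)"
    by (intro span_minimal) auto
  then show "p \<subseteq> span (insert u B)" using perp_span[OF sp u] by simp
qed

lemma pa_main:
  fixes p q :: "(real^'n) set"
  assumes "principal_angles p q ths"
  shows "subspace p \<Longrightarrow> subspace q \<Longrightarrow> length ths = dim p \<and> Kpq p q = sum_list (map (\<lambda>t. (cos t)\<^sup>2) ths)"
  using assms
proof (induction rule: principal_angles.induct)
  case (Nil p q)
  have o: "orthn ({}::(real^'n) set)" unfolding orthn_def by simp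
  have "Kpq p q = 0" using Kpq_basis[of p "{}" q "{}"] Nil o by simp
  then show ?case using Nil by simp
next
  case (Cons u p v q \<theta> ths)
  define p' where "p' = p \<inter> {x. x \<bullet> u = 0}"
  define q' where "q' = q \<inter> {y. y \<bullet> v = 0}"
  have sp': "subspace p'" unfolding p'_def using Cons by (simp add: subspace_inter subspace_hyperplane2)
  have sq': "subspace q'" unfolding q'_def using Cons by (simp add: subspace_inter subspace_hyperplane2)
  have IH: "length ths = dim p' \<and> Kpq p' q' = sum_list (map (\<lambda>t. (cos t)\<^sup>2) ths)"
    using Cons.IH sp' sq' unfolding p'_def q'_def by blast
  define B where "B = onb p'"
  define C where "C = onb q'"
  note Bp = onb_props[OF sp', folded B_def]
  note Cp = onb_props[OF sq', folded C_def]
  have Bu: "\<forall>b\<in>B. b \<bullet> u = 0" using Bp(1) unfolding p'_def by auto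
  have Cv: "\<forall>c\<in>C. c \<bullet> v = 0" using Cp(1) unfolding q'_def by auto
  have oB: "orthn (insert u B)" "u \<notin> B" using orthn_insert[OF Bp(2) Bu \<open>norm u = 1\<close>] by auto
  have oC: "orthn (insert v C)" "v \<notin> C" using orthn_insert[OF Cp(2) Cv \<open>norm v = 1\<close>] by auto
  have spB: "span (insert u B) = p"
    by (rule span_insert_basis) (use Cons Bp in \<open>auto simp: p'_def\<close>)
  have spC: "span (insert v C) = q"
    by (rule span_insert_basis) (use Cons Cp in \<open>auto simp: q'_def\<close>)
  have finB: "finite B" using Bp(2) orthn_def by blast
  have finC: "finite C" using Cp(2) orthn_def by blast
  have H: "\<forall>x\<in>p. \<forall>y\<in>q. norm x = 1 \<longrightarrow> norm y = 1 \<longrightarrow> arccos \<bar>u \<bullet> v\<bar> \<le> arccos \<bar>x \<bullet> y\<bar>"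
    using Cons by simp
  have H': "\<forall>y\<in>q. \<forall>x\<in>p. norm y = 1 \<longrightarrow> norm x = 1 \<longrightarrow> arccos \<bar>v \<bullet> u\<bar> \<le> arccos \<bar>y \<bullet> x\<bar>"
  proof (intro ballI impI)
    fix y x assume "y \<in> q" "x \<in> p" "norm y = 1" "norm x = 1"
    then show "arccos \<bar>v \<bullet> u\<bar> \<le> arccos \<bar>y \<bullet> x\<bar>" using H by (metis inner_commute)
  qed
  have z1: "\<And>b. b \<in> B \<Longrightarrow> b \<bullet> v = 0"
  proof -
    fix b assume b: "b \<in> B"
    have "norm b = 1" using Bp(2) b orthn_def by blast
    then show "b \<bullet> v = 0"
      by (rule cross_zero[OF \<open>subspace p\<close> H \<open>u \<in> p\<close> \<open>norm u = 1\<close> \<open>v \<in> q\<close> \<open>norm v = 1\<close>, rotated])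
        (use b Bp(1) Bu p'_def in auto)
  qed
  have z2: "\<And>c. c \<in> C \<Longrightarrow> u \<bullet> c = 0"
  proof -
    fix c assume c: "c \<in> C"
    have "norm c = 1" using Cp(2) c orthn_def by blast
    then have "c \<bullet> u = 0"
      by (rule cross_zero[OF \<open>subspace q\<close> H' \<open>v \<in> q\<close> \<open>norm v = 1\<close> \<open>u \<in> p\<close> \<open>norm u = 1\<close>, rotated])
        (use c Cp(1) Cv q'_def in auto)
    then show "u \<bullet> c = 0" by (simp add: inner_commute)
  qed
  have "Kpq p q = (\<Sum>b\<in>insert u B. \<Sum>c\<in>insert v C. (b \<bullet> c)\<^sup>2)"
    by (rule Kpq_basis) (use Cons oB oC spB spC in auto)
  also have "\<dots> = (u \<bullet> v)\<^sup>2 + (\<Sum>b\<in>B. \<Sum>c\<in>C. (b \<bullet> c)\<^sup>2)"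
    using finB finC oB(2) oC(2) z1 z2 by (simp add: sum.insert)
  also have "(\<Sum>b\<in>B. \<Sum>c\<in>C. (b \<bullet> c)\<^sup>2) = Kpq p' q'"
    by (rule Kpq_basis[symmetric]) (use sp' sq' Bp Cp in auto)
  finally have K: "Kpq p q = (u \<bullet> v)\<^sup>2 + Kpq p' q'" .
  have le1: "\<bar>u \<bullet> v\<bar> \<le> 1" using Cauchy_Schwarz_ineq2[of u v] Cons by simp
  have "cos \<theta> = \<bar>u \<bullet> v\<bar>" using Cons le1 by (simp add: cos_arccos)
  then have c2: "(cos \<theta>)\<^sup>2 = (u \<bullet> v)\<^sup>2" by simp
  have d: "dim p = dim p' + 1" unfolding p'_def by (rule perp_dim) (use Cons in auto)
  show ?case using IH K c2 d by simp
qed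


lemma pa_exists:
  fixes p q :: "(real^'n) set"
  shows "subspace p \<Longrightarrow> subspace q \<Longrightarrow> dim p = d \<Longrightarrow> dim q = d \<Longrightarrow> \<exists>ths. principal_angles p q ths"
proof (induction d arbitrary: p q)
  case 0
  have "p = {0}" using 0 subspace_0[of p] by auto
  moreover have "q = {0}" using 0 subspace_0[of q] by auto
  ultimately show ?case by (blast intro: principal_angles.Nil)
next
  case (Suc d)
  have unit_ex: "\<exists>x\<in>S. norm x = 1" if "subspace S" "dim S = Suc d" for S :: "(real^'n) set"
  proof -
    have "\<not> S \<subseteq> {0}" using that by (metis dim_eq_0 nat.distinct(1))
    then obtain x where x: "x \<in> S" "x \<noteq> 0" by auto
    then have "(inverse (norm x)) *\<^sub>R x \<in> S" "norm ((inverse (norm x)) *\<^sub>R x) = 1"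
      using that subspace_scale by auto
    then show ?thesis by blast
  qed
  define K where "K = (p \<inter> sphere 0 1) \<times> (q \<inter> sphere (0::real^'n) 1)"
  have cK: "compact K" unfolding K_def
    using Suc.prems closed_subspace by (intro compact_Times closed_Int_compact) auto
  have neK: "K \<noteq> {}" unfolding K_def using unit_ex[OF Suc.prems(1,3)] unit_ex[OF Suc.prems(2,4)] by auto
  have contK: "continuous_on K (\<lambda>z. \<bar>fst z \<bullet> snd z\<bar>)" by (intro continuous_intros)
  obtain z where z: "z \<in> K" and zmax: "\<And>y. y \<in> K \<Longrightarrow> \<bar>fst y \<bullet> snd y\<bar> \<le> \<bar>fst z \<bullet> snd z\<bar>"
    using continuous_attains_sup[OF cK neK contK] by blast
  define u where "u = fst z"
  define v where "v = snd z"
  have u: "u \<in> p" "norm u = 1" and v: "v \<in> q" "norm v = 1" using z unfolding K_def u_def v_def by auto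
  have le1: "\<bar>u \<bullet> v\<bar> \<le> 1" using Cauchy_Schwarz_ineq2[of u v] u v by simp
  have H: "\<forall>x\<in>p. \<forall>y\<in>q. norm x = 1 \<longrightarrow> norm y = 1 \<longrightarrow> arccos \<bar>u \<bullet> v\<bar> \<le> arccos \<bar>x \<bullet> y\<bar>"
  proof (intro ballI impI)
    fix x y assume xy: "x \<in> p" "y \<in> q" "norm x = 1" "norm y = 1"
    then have "(x, y) \<in> K" unfolding K_def by auto
    from zmax[OF this] have "\<bar>x \<bullet> y\<bar> \<le> \<bar>u \<bullet> v\<bar>" unfolding u_def v_def by simp
    then show "arccos \<bar>u \<bullet> v\<bar> \<le> arccos \<bar>x \<bullet> y\<bar>" using le1 by (intro arccos_le_arccos) auto
  qed
  define p' where "p' = p \<inter> {x. x \<bullet> u = 0}"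
  define q' where "q' = q \<inter> {y. y \<bullet> v = 0}"
  have sp': "subspace p'" unfolding p'_def using Suc by (simp add: subspace_inter subspace_hyperplane2)
  have sq': "subspace q'" unfolding q'_def using Suc by (simp add: subspace_inter subspace_hyperplane2)
  have dp: "dim p' = d" using perp_dim[OF Suc.prems(1) u] Suc.prems(3) unfolding p'_def by simp
  have dq: "dim q' = d" using perp_dim[OF Suc.prems(2) v] Suc.prems(4) unfolding q'_def by simp
  obtain ths where "principal_angles p' q' ths" using Suc.IH[OF sp' sq' dp dq] by blast
  then have "principal_angles p q (arccos \<bar>u \<bullet> v\<bar> # ths)"
    unfolding p'_def q'_def by (intro principal_angles.Cons[OF u(1) v(1) u(2) v(2) refl H])
  then show ?case by blast
qed

lemma sum_sin_cos: "sum_list (map (\<lambda>t. (sin t)\<^sup>2) ths) = real (length ths) - sum_list (map (\<lambda>t. (cos t)\<^sup>2) ths)"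
  by (induction ths) (auto simp: sin_squared_eq)

lemma chordal_K:
  fixes p q :: "(real^'n) set"
  assumes "p \<in> grassmannian m" "q \<in> grassmannian m"
  shows "chordal_dist p q = sqrt (real m - Kpq p q)"
proof -
  have sp: "subspace p" "dim p = m" "subspace q" "dim q = m" using assms unfolding grassmannian_def by auto
  have ex: "\<exists>ths. principal_angles p q ths" using pa_exists[OF sp(1) sp(3) sp(2) sp(4)] .
  define ths where "ths = (SOME ths. principal_angles p q ths)"
  have pa: "principal_angles p q ths" unfolding ths_def using someI_ex[OF ex] .
  have m: "length ths = m \<and> Kpq p q = sum_list (map (\<lambda>t. (cos t)\<^sup>2) ths)"
    using pa_main[OF pa sp(1) sp(3)] sp(2) by simp
  show ?thesis unfolding chordal_dist_def ths_def[symmetric] sum_sin_cos using m by simp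
qed



lemma Pm_sym: "Pm p i j = Pm p j i" unfolding Pm_def by (simp add: mult.commute)

lemma Pm_sq: fixes p :: "(real^'n) set" assumes "subspace p"
  shows "(\<Sum>j\<in>UNIV. Pm p i j * Pm p j l) = Pm p i l"
proof -
  note o = onb_props[OF assms]
  have fin: "finite (onb p)" using o(2) orthn_def by blast
  have "(\<Sum>j\<in>UNIV. Pm p i j * Pm p j l) = (\<Sum>j\<in>UNIV. \<Sum>b\<in>onb p. \<Sum>c\<in>onb p. (b$i * c$l) * (b$j * c$j))"
    unfolding Pm_def sum_product by (simp add: algebra_simps)
  also have "\<dots> = (\<Sum>b\<in>onb p. \<Sum>c\<in>onb p. \<Sum>j\<in>UNIV. (b$i * c$l) * (b$j * c$j))"
    by (simp only: sum.swap[where A="UNIV::'n set" and B="onb p"])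
  also have "\<dots> = (\<Sum>b\<in>onb p. \<Sum>c\<in>onb p. b$i * c$l * (b \<bullet> c))"
    unfolding inner_vec_def sum_distrib_left by simp
  also have "\<dots> = (\<Sum>b\<in>onb p. \<Sum>c\<in>onb p. if b = c then b$i * c$l else 0)"
    by (intro sum.cong refl) (simp add: orthn_ip[OF o(2)])
  also have "\<dots> = Pm p i l" unfolding Pm_def using fin by (simp add: sum.delta)
  finally show ?thesis .
qed

lemma Pm_tr: fixes p :: "(real^'n) set" assumes "subspace p"
  shows "(\<Sum>i\<in>UNIV. Pm p i i) = real (dim p)"
proof -
  note o = onb_props[OF assms]
  have "(\<Sum>i\<in>UNIV. Pm p i i) = (\<Sum>b\<in>onb p. b \<bullet> b)"
    unfolding Pm_def inner_vec_def by (subst sum.swap) simp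
  also have "\<dots> = (\<Sum>b\<in>onb p. 1)" using o(2) unfolding orthn_def by (simp add: norm_eq_1)
  also have "\<dots> = real (dim p)" using o(3) by simp
  finally show ?thesis .
qed

definition Xm :: "nat \<Rightarrow> (real^'n) set \<Rightarrow> 'n \<Rightarrow> 'n \<Rightarrow> real" where
  "Xm m p i j = Pm p i j - (real m / real CARD('n)) * dl i j"

context
  fixes m :: nat and p :: "(real^'n) set"
  assumes pg: "p \<in> grassmannian m"
begin

lemma sp: "subspace p" and dp: "dim p = m" using pg unfolding grassmannian_def by auto

lemma Xm_sym: "Xm m p i j = Xm m p j i" unfolding Xm_def by (simp add: Pm_sym dl_def)

lemma Xm_tr: "(\<Sum>i\<in>UNIV. Xm m p i i) = 0"
  unfolding Xm_def using Pm_tr[OF sp] dp by (simp add: sum_subtractf dl_def)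

lemma Xm_sq: "(\<Sum>j\<in>UNIV. Xm m p i j * Xm m p j l) =
   (1 - 2 * (real m / real CARD('n))) * Xm m p i l + (real m / real CARD('n) - (real m / real CARD('n))\<^sup>2) * dl i l"
proof -
  define k where "k = real m / real CARD('n)"
  have "(\<Sum>j\<in>UNIV. Xm m p i j * Xm m p j l) = (\<Sum>j\<in>UNIV. Pm p i j * Pm p j l) - k * Pm p i l - k * Pm p i l + k * k * dl i l"
    unfolding Xm_def k_def[symmetric]
    by (simp add: algebra_simps sum.distrib sum_subtractf sum_distrib_left[symmetric] dsimps Pm_sym[of p l i])
  also have "\<dots> = (1 - 2 * k) * (Pm p i l - k * dl i l) + (k - k\<^sup>2) * dl i l"
    unfolding Pm_sq[OF sp] by (simp add: algebra_simps power2_eq_square)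
  finally show ?thesis unfolding k_def Xm_def .
qed
end

lemma ipX_Xm: fixes p q :: "(real^'n) set" assumes "p \<in> grassmannian m" "q \<in> grassmannian m"
  shows "ipX (Xm m p) (Xm m q) = Kpq p q - (real m)\<^sup>2 / real CARD('n)"
proof -
  have sp: "subspace p" "dim p = m" "subspace q" "dim q = m" using assms unfolding grassmannian_def by auto
  define k where "k = real m / real CARD('n)"
  have "ipX (Xm m p) (Xm m q) = Kpq p q - k * (\<Sum>i\<in>UNIV. Pm q i i) - k * (\<Sum>i\<in>UNIV. Pm p i i) + k * k * real CARD('n)"
    unfolding ipX_def Xm_def k_def[symmetric] Kpq_def
    by (simp add: algebra_simps sum.distrib sum_subtractf sum_distrib_left[symmetric] dsimps)
  also have "\<dots> = Kpq p q - (real m)\<^sup>2 / real CARD('n)"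
    unfolding Pm_tr[OF sp(1)] Pm_tr[OF sp(3)] sp(2) sp(4) k_def by (simp add: field_simps power2_eq_square)
  finally show ?thesis .
qed

lemma Kpp: fixes p :: "(real^'n) set" assumes "p \<in> grassmannian m" shows "Kpq p p = real m"
proof -
  have sp: "subspace p" "dim p = m" using assms unfolding grassmannian_def by auto
  have "Kpq p p = (\<Sum>i\<in>UNIV. \<Sum>j\<in>UNIV. Pm p i j * Pm p j i)" unfolding Kpq_def by (simp add: Pm_sym[of p _ _])
  also have "\<dots> = real m" using Pm_sq[OF sp(1)] Pm_tr[OF sp(1)] sp(2) by simp
  finally show ?thesis .
qed



lemma sqrt_ge_imp: fixes z d :: real assumes "d > 0" "d \<le> sqrt z" shows "d\<^sup>2 \<le> z"
proof -
  have "sqrt z > 0" using assms by linarith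
  then have z: "z > 0" by simp
  have "d\<^sup>2 \<le> (sqrt z)\<^sup>2" using assms by (intro power_mono) auto
  then show ?thesis using z by simp
qed

lemma quad_neg: fixes t b c :: real
  assumes "b \<ge> 0" "c > 0" "t > 0" "t < b / 2 + sqrt (b\<^sup>2 / 4 + c)"
  shows "c + b * t - t\<^sup>2 > 0"
proof -
  define S where "S = sqrt (b\<^sup>2 / 4 + c)"
  have S2: "S\<^sup>2 = b\<^sup>2 / 4 + c" unfolding S_def using assms by (simp add: add_nonneg_pos)
  have "sqrt ((b/2)\<^sup>2) \<le> S" unfolding S_def using assms by (intro real_sqrt_le_mono) (simp add: power_divide)
  then have Sb: "b / 2 \<le> S" using assms by simp
  have a: "t - (b/2 - S) > 0" using Sb assms by linarith
  have bb: "t - (b/2 + S) < 0" using assms unfolding S_def by linarith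
  have "(t - (b/2 - S)) * (t - (b/2 + S)) < 0" using a bb by (simp add: mult_pos_neg)
  moreover have "(t - (b/2 - S)) * (t - (b/2 + S)) = t\<^sup>2 - b * t - c"
    using S2 by (simp add: algebra_simps power2_eq_square)
  ultimately show ?thesis by linarith
qed


theorem theorem3p2:
  fixes C :: "(real ^ 'n) set set" and m :: nat and \<delta> :: real and N s d b c :: real
  defines "N \<equiv> real CARD('n)"
  defines "s \<equiv> real m - \<delta>\<^sup>2"
  defines "d \<equiv> 2 * m * (N - m) / (N * (N - 1) * (N + 2))"
  defines "b \<equiv> 4 * (N - 2 * m)\<^sup>2 / (N * (N - 2) * (N + 4))"
  defines "c \<equiv> 2 * m\<^sup>2 * (N - m)\<^sup>2 / (N\<^sup>2 * (N - 1) * (N + 2))"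
  assumes "1 \<le> m" and "2 * m \<le> CARD('n)" and "\<delta> > 0"
    and "m\<^sup>2 / N < s" and "s < m\<^sup>2 / N + b / 2 + sqrt (b\<^sup>2 / 4 + c)"
    and "delta_code m \<delta> C"
  shows "real (card C) \<le>
    (m - s) * (s - m\<^sup>2 / N + d)\<^sup>2 * (N - 1) * (N + 2) /
    (2 * (s - m\<^sup>2 / N) * (- (s - m\<^sup>2 / N)\<^sup>2 + b * (s - m\<^sup>2 / N) + c))"
proof -
  note Ndef = assms(1) and sdef = assms(2) and ddef = assms(3) and bdef = assms(4) and cdef = assms(5)
  have m1: "1 \<le> m" and m2: "2 * m \<le> CARD('n)" and dpos: "\<delta> > 0" and slo: "m\<^sup>2 / N < s"
    and shi: "s < m\<^sup>2 / N + b / 2 + sqrt (b\<^sup>2 / 4 + c)" and code: "delta_code m \<delta> C"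
    using assms(6-11) by auto
  have card2: "CARD('n) \<ge> 2" using m1 m2 by linarith
  have N2: "N \<ge> 2" unfolding Ndef using card2 by simp
  have Nm: "N - m \<ge> m" unfolding Ndef using m2 by simp
  have m1r: "real m \<ge> 1" using m1 by simp
  have finC: "finite C" and Cg: "C \<subseteq> grassmannian m"
    and Cd: "\<And>p q. p \<in> C \<Longrightarrow> q \<in> C \<Longrightarrow> p \<noteq> q \<Longrightarrow> chordal_dist p q \<ge> \<delta>"
    using code unfolding delta_code_def by auto
  define t where "t = s - (real m)\<^sup>2 / N"
  define M where "M = real m - (real m)\<^sup>2 / N"
  define u where "u = (\<lambda>p q :: (real^'n) set. ipX (Xm m p) (Xm m q))"
  have uval: "\<And>p q. p \<in> C \<Longrightarrow> q \<in> C \<Longrightarrow> u p q = Kpq p q - (real m)\<^sup>2 / N"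
    unfolding u_def Ndef using Cg by (intro ipX_Xm) auto
  have upp: "\<And>p. p \<in> C \<Longrightarrow> u p p = M"
  proof -
    fix p assume p: "p \<in> C"
    have "Kpq p p = real m" using Kpp[of p m] Cg p by blast
    then show "u p p = M" using uval[OF p p] unfolding M_def by simp
  qed
  have uoff: "\<And>p q. p \<in> C \<Longrightarrow> q \<in> C \<Longrightarrow> p \<noteq> q \<Longrightarrow> u p q \<le> t"
  proof -
    fix p q assume pq: "p \<in> C" "q \<in> C" "p \<noteq> q"
    have pg: "p \<in> grassmannian m" "q \<in> grassmannian m" using pq Cg by auto
    have "\<delta> \<le> sqrt (real m - Kpq p q)" using Cd[OF pq] chordal_K[OF pg] by simp
    then have "\<delta>\<^sup>2 \<le> real m - Kpq p q" using dpos by (rule sqrt_ge_imp[rotated])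
    then show "u p q \<le> t" unfolding t_def sdef uval[OF pq(1,2)] by simp
  qed
  have bnn: "b \<ge> 0" unfolding bdef using N2 by (intro divide_nonneg_nonneg) auto
  have cpos: "c > 0" unfolding cdef using N2 Nm m1r by (intro divide_pos_pos mult_pos_pos) auto
  have tpos: "t > 0" unfolding t_def using slo by simp
  have Qpos: "c + b * t - t\<^sup>2 > 0" using quad_neg[OF bnn cpos tpos] shi unfolding t_def by simp
  define k where "k = real m / real CARD('n)"
  have XS: "\<And>p i j. p \<in> C \<Longrightarrow> Xm m p i j = Xm m p j i" using Xm_sym Cg by blast
  have XT: "\<And>p. p \<in> C \<Longrightarrow> (\<Sum>i\<in>UNIV. Xm m p i i) = 0" using Xm_tr Cg by blast
  have XQ: "\<And>p i l. p \<in> C \<Longrightarrow> (\<Sum>j\<in>UNIV. Xm m p i j * Xm m p j l) = (1 - 2 * k) * Xm m p i l + (k - k\<^sup>2) * dl i l"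
    using Xm_sq Cg unfolding k_def by blast
  have bEq: "(1 - 2 * k)\<^sup>2 / ((real CARD('n) + 2)/4 - 2/real CARD('n)) = b"
  proof (cases "N = 2")
    case True
    then have "real m = 1" using m1r Nm by simp
    then show ?thesis unfolding k_def bdef Ndef[symmetric] using True by simp
  next
    case False
    then have N3: "N > 2" using N2 by simp
    have l: "(N + 2)/4 - 2/N = (N - 2) * (N + 4) / (4 * N)" using N3 by (simp add: field_simps)
    have a: "(1 - 2 * (real m / N))\<^sup>2 = (N - 2 * real m)\<^sup>2 / N\<^sup>2" using N3 by (simp add: field_simps)
    have nz: "N - 2 \<noteq> 0" "N + 4 \<noteq> 0" "N \<noteq> 0" using N3 by auto
    have gen: "\<And>X Y::real. Y \<noteq> 0 \<Longrightarrow> X / N\<^sup>2 / (Y / (4 * N)) = 4 * X / (N * Y)"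
      using nz by (simp add: field_simps power2_eq_square)
    have "(N - 2 * real m)\<^sup>2 / N\<^sup>2 / ((N - 2) * (N + 4) / (4 * N)) = 4 * (N - 2 * real m)\<^sup>2 / (N * (N - 2) * (N + 4))"
      using gen[of "(N - 2) * (N + 4)" "(N - 2 * real m)\<^sup>2"] nz by (simp add: mult.assoc)
    then show ?thesis unfolding k_def bdef Ndef[symmetric] l a by simp
  qed
  have cEq: "((k - k\<^sup>2) * real CARD('n))\<^sup>2 / (real CARD('n) * (real CARD('n) + 1) / 2 - 1) = c"
  proof -
    have e1: "real CARD('n) * (real CARD('n) + 1) / 2 - 1 = (N - 1) * (N + 2) / 2" unfolding Ndef[symmetric] by (simp add: field_simps)
    have e2: "(k - k\<^sup>2) * real CARD('n) = real m * (N - real m) / N" unfolding k_def Ndef[symmetric] using N2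
      by (simp add: field_simps power2_eq_square)
    have nz: "N \<noteq> 0" "(N - 1) * (N + 2) \<noteq> 0" using N2 by auto
    have gen: "\<And>X Y::real. Y \<noteq> 0 \<Longrightarrow> (X / N)\<^sup>2 / (Y / 2) = 2 * X\<^sup>2 / (N\<^sup>2 * Y)"
      using nz by (simp add: field_simps power2_eq_square)
    show ?thesis unfolding e1 e2 cdef gen[OF nz(2)] by (simp add: power_mult_distrib mult.assoc)
  qed
  define g where "g = (\<lambda>x::real. x\<^sup>2 - b * x - c)"
  have G: "\<And>w. 0 \<le> (\<Sum>p\<in>C. \<Sum>q\<in>C. w p * w q * g (u p q))"
  proof -
    fix w :: "(real^'n) set \<Rightarrow> real"
    show "0 \<le> (\<Sum>p\<in>C. \<Sum>q\<in>C. w p * w q * g (u p q))"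
      using gram[of C "Xm m" "1 - 2 * k" "k - k\<^sup>2" w, OF finC XS XT XQ card2]
      unfolding bEq cEq g_def u_def by simp
  qed
  have G1: "0 \<le> (\<Sum>p\<in>C. \<Sum>q\<in>C. g (u p q))" using G[of "\<lambda>_. 1"] by simp
  have G2: "0 \<le> (\<Sum>p\<in>C. \<Sum>q\<in>C. u p q * g (u p q))"
  proof -
    have "0 \<le> (\<Sum>i\<in>UNIV. \<Sum>j\<in>UNIV. \<Sum>p\<in>C. \<Sum>q\<in>C. Xm m p i j * Xm m q i j * g (u p q))"
      by (rule sum_nonneg, rule sum_nonneg, rule G)
    also have "\<dots> = (\<Sum>p\<in>C. \<Sum>q\<in>C. \<Sum>i\<in>UNIV. \<Sum>j\<in>UNIV. Xm m p i j * Xm m q i j * g (u p q))"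
      by (simp only: sum.swap[where A="UNIV::'n set" and B=C])
    also have "\<dots> = (\<Sum>p\<in>C. \<Sum>q\<in>C. u p q * g (u p q))"
      unfolding u_def ipX_def sum_distrib_right ..
    finally show ?thesis .
  qed
  have G0: "0 \<le> (\<Sum>p\<in>C. \<Sum>q\<in>C. u p q)"
  proof -
    have "ipX (Aw C (Xm m) (\<lambda>_. 1)) (Aw C (Xm m) (\<lambda>_. 1)) = (\<Sum>p\<in>C. \<Sum>q\<in>C. 1 * 1 * u p q)"
      unfolding u_def by (rule nA[OF finC XS XT XQ])
    moreover have "0 \<le> ipX (Aw C (Xm m) (\<lambda>_. 1)) (Aw C (Xm m) (\<lambda>_. 1))"
      unfolding ipX_def by (intro sum_nonneg) auto
    ultimately show ?thesis by simp
  qed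
  define Q where "Q = c + b * t - t\<^sup>2"
  have Qp: "Q > 0" using Qpos unfolding Q_def .
  define a where "a = c / t"
  define F where "F = (\<lambda>x::real. (x - t) * (x + a)\<^sup>2)"
  define f2 where "f2 = 2 * a - t + b"
  define f1 where "f1 = a\<^sup>2 - 2 * a * t + c + 2 * a * b - b * t + b\<^sup>2"
  define f0 where "f0 = c * f2 - a\<^sup>2 * t"
  have Fid: "\<And>x. F x = f0 + f1 * x + f2 * g x + x * g x"
    unfolding F_def f0_def f1_def f2_def g_def by (simp add: algebra_simps power2_eq_square)
  have apos: "a > 0" unfolding a_def using cpos tpos by simp
  have f2nn: "f2 \<ge> 0"
  proof -
    have "c / t + b - t = Q / t" unfolding Q_def using tpos by (simp add: field_simps power2_eq_square)
    then have "c / t + b - t > 0" using Qp tpos by simp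
    then show ?thesis unfolding f2_def a_def using apos a_def by linarith
  qed
  have f1nn: "f1 \<ge> 0"
  proof -
    have "f1 * t\<^sup>2 = Q * (c + b * t)" unfolding f1_def a_def Q_def using tpos
      by (simp add: field_simps power2_eq_square)
    moreover have "Q * (c + b * t) \<ge> 0" using Qp cpos bnn tpos by simp
    ultimately have "f1 * t\<^sup>2 \<ge> 0" by simp
    then show ?thesis using tpos by (simp add: zero_le_mult_iff)
  qed
  have f0v: "f0 = c / t * Q" unfolding f0_def f2_def a_def Q_def using tpos
    by (simp add: field_simps power2_eq_square)
  have f0pos: "f0 > 0" unfolding f0v using cpos tpos Qp by simp
  have Fneg: "\<And>x. x \<le> t \<Longrightarrow> F x \<le> 0" unfolding F_def
    by (simp add: mult_nonpos_nonneg)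
  define n where "n = real (card C)"
  have low: "f0 * (n * n) \<le> (\<Sum>p\<in>C. \<Sum>q\<in>C. F (u p q))"
  proof -
    have "(\<Sum>p\<in>C. \<Sum>q\<in>C. F (u p q)) = (\<Sum>p\<in>C. \<Sum>q\<in>C. f0 + f1 * u p q + f2 * g (u p q) + u p q * g (u p q))"
      unfolding Fid ..
    also have "\<dots> = f0 * (n * n) + f1 * (\<Sum>p\<in>C. \<Sum>q\<in>C. u p q) + f2 * (\<Sum>p\<in>C. \<Sum>q\<in>C. g (u p q))
        + (\<Sum>p\<in>C. \<Sum>q\<in>C. u p q * g (u p q))"
      unfolding n_def by (simp add: sum.distrib sum_distrib_left)
    finally have e: "(\<Sum>p\<in>C. \<Sum>q\<in>C. F (u p q)) = \<dots>" .
    have "f1 * (\<Sum>p\<in>C. \<Sum>q\<in>C. u p q) \<ge> 0" using f1nn G0 by simp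
    moreover have "f2 * (\<Sum>p\<in>C. \<Sum>q\<in>C. g (u p q)) \<ge> 0" using f2nn G1 by simp
    ultimately show ?thesis unfolding e using G2 by linarith
  qed
  have up: "(\<Sum>p\<in>C. \<Sum>q\<in>C. F (u p q)) \<le> n * F M"
  proof -
    have "\<And>p. p \<in> C \<Longrightarrow> (\<Sum>q\<in>C. F (u p q)) \<le> F M"
    proof -
      fix p assume p: "p \<in> C"
      have "(\<Sum>q\<in>C. F (u p q)) = F (u p p) + (\<Sum>q\<in>C - {p}. F (u p q))"
        using finC p by (simp add: sum.remove)
      moreover have "(\<Sum>q\<in>C - {p}. F (u p q)) \<le> 0"
        using uoff p Fneg by (intro sum_nonpos) auto
      ultimately show "(\<Sum>q\<in>C. F (u p q)) \<le> F M" using upp[OF p] by simp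
    qed
    then have "(\<Sum>p\<in>C. \<Sum>q\<in>C. F (u p q)) \<le> (\<Sum>p\<in>C. F M)" by (rule sum_mono)
    then show ?thesis unfolding n_def by simp
  qed
  have Mt: "M - t = real m - s" unfolding M_def t_def by simp
  have Mtpos: "M - t > 0" unfolding Mt sdef using dpos by simp
  have FMnn: "F M \<ge> 0" unfolding F_def using Mtpos by simp
  have bound: "n \<le> F M / f0"
  proof (cases "n = 0")
    case True then show ?thesis using FMnn f0pos by simp
  next
    case False
    then have npos: "n > 0" unfolding n_def by simp
    have "f0 * (n * n) \<le> n * F M" using low up by linarith
    then have "n * (f0 * n) \<le> n * F M" by (simp add: algebra_simps)
    then have "f0 * n \<le> F M" using npos by simp
    then show ?thesis using f0pos by (simp add: field_simps)
  qed
  have Mpos: "M > 0" using Mtpos tpos by linarith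
  have Mv: "M = real m * (N - real m) / N" unfolding M_def using N2 by (simp add: field_simps power2_eq_square)
  have dpos': "d > 0" unfolding ddef using N2 Nm m1r by (intro divide_pos_pos mult_pos_pos) auto
  have cMd: "c = M * d" unfolding cdef ddef Mv using N2 by (simp add: field_simps power2_eq_square)
  have KMd: "(N - 1) * (N + 2) = 2 * M / d" unfolding ddef Mv using N2 Nm m1r by (simp add: field_simps)
  have gen: "\<And>M t d Q :: real. t > 0 \<Longrightarrow> Q > 0 \<Longrightarrow> d > 0 \<Longrightarrow> M > 0 \<Longrightarrow>
     (M - t) * (M + M * d / t)\<^sup>2 / (M * d / t * Q) = (M - t) * (t + d)\<^sup>2 * (2 * M / d) / (2 * t * Q)"
    by (simp add: field_simps power2_eq_square)
  have "F M / f0 = (M - t) * (t + d)\<^sup>2 * ((N - 1) * (N + 2)) / (2 * t * Q)"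
    unfolding F_def f0v a_def cMd using gen[OF tpos Qp dpos' Mpos] KMd by simp
  also have "\<dots> = (m - s) * (t + d)\<^sup>2 * (N - 1) * (N + 2) / (2 * t * (- t\<^sup>2 + b * t + c))"
    unfolding Mt Q_def by (simp add: mult.assoc add.commute add.left_commute)
  also have "\<dots> = (m - s) * (s - m\<^sup>2 / N + d)\<^sup>2 * (N - 1) * (N + 2) /
    (2 * (s - m\<^sup>2 / N) * (- (s - m\<^sup>2 / N)\<^sup>2 + b * (s - m\<^sup>2 / N) + c))"
    unfolding t_def by simp
  finally show ?thesis using bound unfolding n_def by simp
qed
end
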